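(* Let $\mathcal{H}$ be a finite family of rooted digraphs, $D$ a digraph, $k$ an integer and $W\subseteq V(D)$ an $\mathcal{H}$-deletion set of $D$ of size at most $k+1$. Then $D$ has an $\mathcal{H}$-deletion set of size at most $k$ disjoint from $W$ if and only if there exists an ordered partition $\mathcal{S}=(S_1,\ldots,S_q)$ of $W$ such that the instance $(D,\mathcal{S},W,k)$ has a nice solution.
   Context: Subgraphs are not necessarily induced; strong components are maximal sets of mutually reachable vertices. A digraph $F$ is rooted if some vertex of $F$ reaches all vertices of $F$ in $F$; for each such $F$ one such vertex is fixed canonically and denoted $r(F)$ (its root). $X\subseteq V(D)$ is an $\mathcal{H}$-deletion set of $D$ if no strong component of $D-X$ contains a subgraph isomorphic to a graph in $\mathcal{H}$. For $A\subseteq V(D)$ and $Y\subseteq V(D)$, $R(A,Y)$ denotes the set of vertices reachable by a directed path from a vertex of $A$ in $D-Y$. Given an ordered partition $\mathcal{S}=(S_1,\dots,S_q)$ of $W$, a solution for $(D,\mathcal{S},W,k)$ is a set $X\subseteq V(D)$ with $|X|\le k$, $X\cap W=\emptyset$, $X$ an $\mathcal{H}$-deletion set of $D$, and $X$ intersecting every directed $S_i$-$S_j$ path in $D$ for all $i<j$. A solution $X$ is nice if for every subgraph $F\subseteq D$ isomorphic to a graph in $\mathcal{H}$ and every $i\in[q]$, at least one holds: (1) $X\cap V(F)\neq\emptyset$; (2) $r(F)\notin R(S_i,X)$; (3) there is $v\in V(F)$ such that $D-X$ has no directed path from $v$ to $S_i$. *)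

theory Defs
  imports Main
begin

type_synonym 'a digraph = "'a set \<times> ('a \<times> 'a) set"

definition verts :: "'a digraph \<Rightarrow> 'a set" where "verts D = fst D"
definition arcs :: "'a digraph \<Rightarrow> ('a \<times> 'a) set" where "arcs D = snd D"

definition digraph :: "'a digraph \<Rightarrow> bool" where
  "digraph D \<longleftrightarrow> finite (verts D) \<and> arcs D \<subseteq> verts D \<times> verts D"

definition subgraph :: "'a digraph \<Rightarrow> 'a digraph \<Rightarrow> bool" where
  "subgraph F D \<longleftrightarrow> digraph F \<and> verts F \<subseteq> verts D \<and> arcs F \<subseteq> arcs D"

definition isomorphic :: "'a digraph \<Rightarrow> 'b digraph \<Rightarrow> bool" where
  "isomorphic F H \<longleftrightarrow> (\<exists>f. bij_betw f (verts F) (verts H) \<and>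
     (\<forall>u\<in>verts F. \<forall>v\<in>verts F. (u, v) \<in> arcs F \<longleftrightarrow> (f u, f v) \<in> arcs H))"

definition reach :: "'a digraph \<Rightarrow> 'a \<Rightarrow> 'a \<Rightarrow> bool" where
  "reach D u v \<longleftrightarrow> u \<in> verts D \<and> v \<in> verts D \<and> (u, v) \<in> (arcs D)\<^sup>*"

definition dpath :: "'a digraph \<Rightarrow> 'a list \<Rightarrow> bool" where
  "dpath D p \<longleftrightarrow> p \<noteq> [] \<and> set p \<subseteq> verts D \<and>
     (\<forall>i. Suc i < length p \<longrightarrow> (p ! i, p ! Suc i) \<in> arcs D)"

definition rooted :: "'a digraph \<Rightarrow> bool" where
  "rooted F \<longleftrightarrow> (\<exists>r\<in>verts F. \<forall>v\<in>verts F. reach F r v)"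

definition root_choice :: "('a digraph \<Rightarrow> 'a) \<Rightarrow> bool" where
  "root_choice r \<longleftrightarrow> (\<forall>F. digraph F \<and> rooted F \<longrightarrow>
      r F \<in> verts F \<and> (\<forall>v\<in>verts F. reach F (r F) v))"

definition induced :: "'a digraph \<Rightarrow> 'a set \<Rightarrow> 'a digraph" where
  "induced D C = (C, arcs D \<inter> (C \<times> C))"

definition del :: "'a digraph \<Rightarrow> 'a set \<Rightarrow> 'a digraph" where
  "del D X = induced D (verts D - X)"

definition strong_component :: "'a digraph \<Rightarrow> 'a set \<Rightarrow> bool" where
  "strong_component D C \<longleftrightarrow> (\<exists>u\<in>verts D. C = {v. reach D u v \<and> reach D v u})"

definition H_deletion_set :: "'b digraph set \<Rightarrow> 'a digraph \<Rightarrow> 'a set \<Rightarrow> bool" where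
  "H_deletion_set Hs D X \<longleftrightarrow> X \<subseteq> verts D \<and>
     (\<forall>C. strong_component (del D X) C \<longrightarrow>
        \<not> (\<exists>F. \<exists>H\<in>Hs. subgraph F (induced (del D X) C) \<and> isomorphic F H))"

definition Rset :: "'a digraph \<Rightarrow> 'a set \<Rightarrow> 'a set \<Rightarrow> 'a set" where
  "Rset D A Y = {v. \<exists>a\<in>A. reach (del D Y) a v}"

definition ordered_partition :: "'a set list \<Rightarrow> 'a set \<Rightarrow> bool" where
  "ordered_partition Ss W \<longleftrightarrow> (\<forall>i<length Ss. Ss ! i \<noteq> {}) \<and>
     (\<forall>i j. i < j \<and> j < length Ss \<longrightarrow> Ss ! i \<inter> Ss ! j = {}) \<and> \<Union> (set Ss) = W"

definition solution :: "'b digraph set \<Rightarrow> 'a digraph \<Rightarrow> 'a set list \<Rightarrow> 'a set \<Rightarrow> int \<Rightarrow> 'a set \<Rightarrow> bool" where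
  "solution Hs D Ss W k X \<longleftrightarrow> X \<subseteq> verts D \<and> int (card X) \<le> k \<and> X \<inter> W = {} \<and>
     H_deletion_set Hs D X \<and>
     (\<forall>i j p. i < j \<and> j < length Ss \<and> dpath D p \<and> hd p \<in> Ss ! i \<and> last p \<in> Ss ! j
        \<longrightarrow> set p \<inter> X \<noteq> {})"

definition nice_solution :: "'b digraph set \<Rightarrow> ('a digraph \<Rightarrow> 'a) \<Rightarrow> 'a digraph \<Rightarrow> 'a set list
    \<Rightarrow> 'a set \<Rightarrow> int \<Rightarrow> 'a set \<Rightarrow> bool" where
  "nice_solution Hs r D Ss W k X \<longleftrightarrow> solution Hs D Ss W k X \<and>
     (\<forall>F. (subgraph F D \<and> (\<exists>H\<in>Hs. isomorphic F H)) \<longrightarrow>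
        (\<forall>i<length Ss.
           X \<inter> verts F \<noteq> {} \<or>
           r F \<notin> Rset D (Ss ! i) X \<or>
           (\<exists>v\<in>verts F. \<not> (\<exists>s\<in>Ss ! i. reach (del D X) v s))))"

end

theory Submission
  imports Defs
begin

lemma verts_pair[simp]: "verts (a, b) = a" by (simp add: verts_def)
lemma arcs_pair[simp]: "arcs (a, b) = b" by (simp add: arcs_def)

lemma verts_del[simp]: "verts (del D X) = verts D - X"
  by (simp add: del_def induced_def)
lemma arcs_del[simp]: "arcs (del D X) = arcs D \<inter> ((verts D - X) \<times> (verts D - X))"
  by (simp add: del_def induced_def)

lemma topo_part:
  assumes "finite A"
    and "\<forall>a\<in>A. R a a"
    and "\<forall>a\<in>A. \<forall>b\<in>A. \<forall>c\<in>A. R a b \<longrightarrow> R b c \<longrightarrow> R a c"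
  shows "\<exists>Ss. ordered_partition Ss A \<and> (\<forall>i<length Ss. \<forall>u\<in>Ss!i. \<forall>v\<in>Ss!i. R u v)
     \<and> (\<forall>i j. i < j \<and> j < length Ss \<longrightarrow> (\<forall>u\<in>Ss!i. \<forall>v\<in>Ss!j. \<not> R u v))"
  using assms
proof (induction A rule: finite_psubset_induct)
  case (psubset A)
  show ?case
  proof (cases "A = {}")
    case True
    then show ?thesis by (intro exI[of _ "[]"]) (simp add: ordered_partition_def)
  next
    case False
    then obtain a0 where "a0 \<in> A" by blast
    then obtain m where m: "m \<in> A" and mmin: "\<forall>y. y \<in> A \<longrightarrow> card {a\<in>A. R m a} \<le> card {a\<in>A. R y a}"
      using ex_has_least_nat[of "\<lambda>x. x \<in> A" a0 "\<lambda>x. card {a\<in>A. R x a}"] by blast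
    have sink: "R a m" if "a \<in> A" "R m a" for a
    proof (rule ccontr)
      assume na: "\<not> R a m"
      have "{b\<in>A. R a b} \<subset> {b\<in>A. R m b}"
      proof
        show "{b\<in>A. R a b} \<subseteq> {b\<in>A. R m b}" using psubset.prems(2) m that by blast
        show "{b\<in>A. R a b} \<noteq> {b\<in>A. R m b}" using na m psubset.prems(1) by blast
      qed
      then have lt: "card {b\<in>A. R a b} < card {b\<in>A. R m b}"
        by (rule psubset_card_mono[rotated]) (simp add: psubset.hyps(1))
      have "card {b\<in>A. R m b} \<le> card {b\<in>A. R a b}" using mmin that(1) by blast
      with lt show False by linarith
    qed
    define S1 where "S1 = {a\<in>A. R m a \<and> R a m}"
    have mS1: "m \<in> S1" using m psubset.prems(1) by (simp add: S1_def)
    have A1: "A - S1 \<subset> A" using mS1 S1_def by blast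
    have A2: "\<forall>a\<in>A - S1. R a a" using psubset.prems(1) by blast
    have A3: "\<forall>a\<in>A - S1. \<forall>b\<in>A - S1. \<forall>c\<in>A - S1. R a b \<longrightarrow> R b c \<longrightarrow> R a c"
      using psubset.prems(2) by blast
    from psubset.IH[OF A1 A2 A3] obtain Ss where op: "ordered_partition Ss (A - S1)"
      and cl: "\<forall>i<length Ss. \<forall>u\<in>Ss!i. \<forall>v\<in>Ss!i. R u v"
      and ord: "\<forall>i j. i < j \<and> j < length Ss \<longrightarrow> (\<forall>u\<in>Ss!i. \<forall>v\<in>Ss!j. \<not> R u v)"
      by blast
    have sub: "\<forall>i<length Ss. Ss!i \<subseteq> A - S1" using op unfolding ordered_partition_def
      by (metis Union_upper nth_mem)
    have S1A: "S1 \<subseteq> A" by (auto simp: S1_def)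
    show ?thesis
    proof (intro exI[of _ "S1 # Ss"] conjI)
      show "ordered_partition (S1 # Ss) A"
        unfolding ordered_partition_def
      proof (intro conjI allI impI)
        fix i assume "i < length (S1 # Ss)"
        then show "(S1 # Ss) ! i \<noteq> {}" using mS1 op unfolding ordered_partition_def
          by (cases i) auto
      next
        fix i j assume ij: "i < j \<and> j < length (S1 # Ss)"
        then obtain j' where j: "j = Suc j'" "j' < length Ss" by (cases j) auto
        show "(S1 # Ss) ! i \<inter> (S1 # Ss) ! j = {}"
        proof (cases i)
          case 0
          then show ?thesis using j sub by auto
        next
          case (Suc i')
          then show ?thesis using j ij op unfolding ordered_partition_def by auto
        qed
      next
        show "\<Union> (set (S1 # Ss)) = A" using op S1A unfolding ordered_partition_def by auto
      qed
    next
      show "\<forall>i<length (S1 # Ss). \<forall>u\<in>(S1 # Ss) ! i. \<forall>v\<in>(S1 # Ss) ! i. R u v"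
      proof (intro allI impI ballI)
        fix i u v assume i: "i < length (S1 # Ss)" and u: "u \<in> (S1 # Ss) ! i" and v: "v \<in> (S1 # Ss) ! i"
        show "R u v"
        proof (cases i)
          case 0
          then have "u \<in> S1" "v \<in> S1" using u v by auto
          then show ?thesis using psubset.prems(2) m unfolding S1_def by blast
        next
          case (Suc i')
          then show ?thesis using cl i u v by auto
        qed
      qed
    next
      show "\<forall>i j. i < j \<and> j < length (S1 # Ss) \<longrightarrow>
        (\<forall>u\<in>(S1 # Ss) ! i. \<forall>v\<in>(S1 # Ss) ! j. \<not> R u v)"
      proof (intro allI impI ballI)
        fix i j u v assume ij: "i < j \<and> j < length (S1 # Ss)" and u: "u \<in> (S1 # Ss) ! i"
          and v: "v \<in> (S1 # Ss) ! j"
        then obtain j' where j: "j = Suc j'" "j' < length Ss" by (cases j) auto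
        have vA: "v \<in> A - S1" using sub j v by auto
        show "\<not> R u v"
        proof (cases i)
          case 0
          then have uS: "u \<in> S1" using u by auto
          show ?thesis
          proof
            assume "R u v"
            then have "R m v" using uS vA m psubset.prems(2) unfolding S1_def by blast
            then have "R v m" using sink vA by blast
            then show False using vA \<open>R m v\<close> unfolding S1_def by blast
          qed
        next
          case (Suc i')
          then show ?thesis using ord ij j u v by auto
        qed
      qed
    qed
  qed
qed

lemma dpath_rtrancl:
  "dpath D p \<Longrightarrow> set p \<subseteq> S \<Longrightarrow> (hd p, last p) \<in> (arcs D \<inter> S \<times> S)\<^sup>*"
proof (induction p)
  case Nil
  then show ?case by (simp add: dpath_def)
next
  case (Cons a p)
  show ?case
  proof (cases "p = []")
    case True
    then show ?thesis by simp
  next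
    case False
    have dp: "dpath D p" using Cons.prems False unfolding dpath_def
      by (auto dest: spec[of _ "Suc _"])
    have "(a, p ! 0) \<in> arcs D" using Cons.prems False unfolding dpath_def
      by (metis One_nat_def length_Cons length_greater_0_conv nth_Cons_0 nth_Cons_Suc
          Suc_less_eq)
    then have "(a, hd p) \<in> arcs D \<inter> S \<times> S" using Cons.prems False by (auto simp: hd_conv_nth)
    moreover have "(hd p, last p) \<in> (arcs D \<inter> S \<times> S)\<^sup>*" using Cons.IH dp Cons.prems by auto
    ultimately show ?thesis using False by (auto intro: converse_rtrancl_into_rtrancl)
  qed
qed

lemma iso_rooted:
  assumes "isomorphic F H" "digraph H" "rooted H"
  shows "rooted F"
proof -
  obtain f where bij: "bij_betw f (verts F) (verts H)"
    and iso: "\<forall>u\<in>verts F. \<forall>v\<in>verts F. (u, v) \<in> arcs F \<longleftrightarrow> (f u, f v) \<in> arcs H"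
    using assms(1) unfolding isomorphic_def by blast
  obtain h where h: "h \<in> verts H" "\<forall>v\<in>verts H. reach H h v"
    using assms(3) unfolding rooted_def by blast
  define g where "g = inv_into (verts F) f"
  have gin: "g w \<in> verts F" if "w \<in> verts H" for w
    using that bij unfolding g_def by (metis bij_betw_def inv_into_into)
  have fg: "f (g w) = w" if "w \<in> verts H" for w
    using that bij unfolding g_def by (meson bij_betw_inv_into_right)
  have gf: "g (f v) = v" if "v \<in> verts F" for v
    using that bij unfolding g_def by (meson bij_betw_inv_into_left)
  have main: "(g h, g w) \<in> (arcs F)\<^sup>*" if "(h, w) \<in> (arcs H)\<^sup>*" for w
    using that
  proof (induction rule: rtrancl_induct)
    case base
    then show ?case by simp
  next
    case (step y z)
    have "y \<in> verts H" "z \<in> verts H" using step.hyps(2) assms(2) unfolding digraph_def by auto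
    then have "(g y, g z) \<in> arcs F" using iso gin fg step.hyps(2) by metis
    then show ?case using step.IH by (meson rtrancl_into_rtrancl)
  qed
  show ?thesis unfolding rooted_def
  proof (intro bexI[of _ "g h"] ballI)
    fix v assume v: "v \<in> verts F"
    then have "f v \<in> verts H" using bij by (meson bij_betw_apply)
    then have "(h, f v) \<in> (arcs H)\<^sup>*" using h unfolding reach_def by blast
    then have "(g h, v) \<in> (arcs F)\<^sup>*" using main gf v by metis
    then show "reach F (g h) v" using v gin h unfolding reach_def by blast
  qed (use gin h in blast)
qed

theorem lemma8:
  fixes Hs :: "'b digraph set" and D :: "'a digraph" and r :: "'a digraph \<Rightarrow> 'a"
    and k :: int and W :: "'a set"
  assumes "finite Hs"
    and "\<forall>H\<in>Hs. digraph H \<and> rooted H"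
    and "digraph D"
    and "root_choice r"
    and "H_deletion_set Hs D W"
    and "int (card W) \<le> k + 1"
  shows "(\<exists>X. H_deletion_set Hs D X \<and> int (card X) \<le> k \<and> X \<inter> W = {}) \<longleftrightarrow>
         (\<exists>Ss. ordered_partition Ss W \<and> (\<exists>X. nice_solution Hs r D Ss W k X))"
proof
  assume "\<exists>Ss. ordered_partition Ss W \<and> (\<exists>X. nice_solution Hs r D Ss W k X)"
  then show "\<exists>X. H_deletion_set Hs D X \<and> int (card X) \<le> k \<and> X \<inter> W = {}"
    unfolding nice_solution_def solution_def by blast
next
  assume "\<exists>X. H_deletion_set Hs D X \<and> int (card X) \<le> k \<and> X \<inter> W = {}"
  then obtain X where Xd: "H_deletion_set Hs D X" and Xc: "int (card X) \<le> k" and XW: "X \<inter> W = {}"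
    by blast
  define G where "G = del D X"
  have WV: "W \<subseteq> verts D" using assms(5) unfolding H_deletion_set_def by blast
  have XV: "X \<subseteq> verts D" using Xd unfolding H_deletion_set_def by blast
  have fW: "finite W" using WV assms(3) unfolding digraph_def by (meson finite_subset)
  have WG: "W \<subseteq> verts G" using WV XW unfolding G_def by auto
  have rrefl: "\<forall>a\<in>W. reach G a a" using WG unfolding reach_def by auto
  have rtrans: "reach G a c" if "reach G a b" "reach G b c" for a b c
    using that unfolding reach_def by (meson rtrancl_trans)
  obtain Ss where op: "ordered_partition Ss W"
    and cl: "\<forall>i<length Ss. \<forall>u\<in>Ss!i. \<forall>v\<in>Ss!i. reach G u v"
    and ord: "\<forall>i j. i < j \<and> j < length Ss \<longrightarrow> (\<forall>u\<in>Ss!i. \<forall>v\<in>Ss!j. \<not> reach G u v)"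
    using topo_part[of W "reach G"] fW rrefl rtrans by blast
  have sub: "\<forall>i<length Ss. Ss!i \<subseteq> W" using op unfolding ordered_partition_def
    by (metis Union_upper nth_mem)
  have sol: "solution Hs D Ss W k X"
    unfolding solution_def
  proof (intro conjI XV Xc XW Xd allI impI)
    fix i j p assume h: "i < j \<and> j < length Ss \<and> dpath D p \<and> hd p \<in> Ss ! i \<and> last p \<in> Ss ! j"
    show "set p \<inter> X \<noteq> {}"
    proof
      assume e: "set p \<inter> X = {}"
      have "set p \<subseteq> verts D - X" using h e unfolding dpath_def by auto
      then have "(hd p, last p) \<in> (arcs G)\<^sup>*" using dpath_rtrancl[of D p "verts D - X"] h
        unfolding G_def by simp
      moreover have hW: "hd p \<in> W" "last p \<in> W" using h sub by (meson less_trans subsetD)+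
      ultimately have "reach G (hd p) (last p)" using WG unfolding reach_def by blast
      then show False using ord h by blast
    qed
  qed
  show "\<exists>Ss. ordered_partition Ss W \<and> (\<exists>X. nice_solution Hs r D Ss W k X)"
  proof (intro exI conjI)
    show "ordered_partition Ss W" by (rule op)
    show "nice_solution Hs r D Ss W k X"
      unfolding nice_solution_def
    proof (intro conjI sol allI impI)
      fix F i assume FH: "subgraph F D \<and> (\<exists>H\<in>Hs. isomorphic F H)" and i: "i < length Ss"
      then obtain H where H: "H \<in> Hs" "isomorphic F H" by blast
      have dF: "digraph F" using FH unfolding subgraph_def by blast
      have rF: "rooted F" using iso_rooted[OF H(2)] assms(2) H(1) by blast
      have root: "r F \<in> verts F" "\<forall>v\<in>verts F. reach F (r F) v"
        using assms(4) dF rF unfolding root_choice_def by blast+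
      show "X \<inter> verts F \<noteq> {} \<or> r F \<notin> Rset D (Ss ! i) X \<or>
           (\<exists>v\<in>verts F. \<not> (\<exists>s\<in>Ss ! i. reach (del D X) v s))"
      proof (rule ccontr)
        assume "\<not> ?thesis"
        then have dis: "X \<inter> verts F = {}" and inR: "r F \<in> Rset D (Ss ! i) X"
          and bk: "\<forall>v\<in>verts F. \<exists>s\<in>Ss ! i. reach G v s" unfolding G_def by auto
        obtain a where a: "a \<in> Ss ! i" "reach G a (r F)" using inR unfolding Rset_def G_def by blast
        have aG: "a \<in> verts G" using a sub i WG by blast
        have arcsFG: "arcs F \<subseteq> arcs G"
          using FH dF dis unfolding subgraph_def digraph_def G_def by auto
        have vFG: "verts F \<subseteq> verts G"
          using FH dis unfolding subgraph_def G_def by auto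
        have FG: "reach G u v" if "reach F u v" for u v
          using that vFG rtrancl_mono[OF arcsFG] unfolding reach_def by blast
        define C where "C = {v. reach G a v \<and> reach G v a}"
        have scC: "strong_component G C" unfolding strong_component_def C_def using aG by blast
        have vC: "verts F \<subseteq> C"
        proof
          fix v assume v: "v \<in> verts F"
          have "reach G a v" using rtrans[OF a(2) FG] root v by blast
          moreover obtain s where "s \<in> Ss ! i" "reach G v s" using bk v by blast
          moreover have "reach G s a" using cl i a(1) \<open>s \<in> Ss ! i\<close> by blast
          ultimately show "v \<in> C" unfolding C_def using rtrans by blast
        qed
        have "subgraph F (induced G C)"
          unfolding subgraph_def induced_def using dF vC arcsFG dF
          unfolding digraph_def by auto
        then show False using Xd scC H unfolding H_deletion_set_def G_def by blast
      qed
    qed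
  qed
qed

end
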